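(* Let $n\ge3$ and $k\ge2$ be integers, and let $A=\mathrm{pdiag}(a_1,\dots,a_n)$ with $0\le a_1\le\dots\le a_n$. If there exists $i$ with $2\le i\le n-1$ such that $$a_i>\frac{\max\{(k-2)a_n,\ k a_1\}}{k-1},$$ then $D=A^k$ (which has the $k$-th root $A$) does not satisfy the root condition; that is, there exist $i',j',t\in[n]$ with $D_{i'j'}+D_{tt}<D_{i't}+D_{tj'}$.
   Context: Max-plus conventions: $\oplus=\max$, $\otimes=+$; $(A\otimes B)_{ij}=\max_t(A_{it}+B_{tj})$, $A^k$ is the $k$-fold max-plus power. $\mathrm{pdiag}(a_1,\dots,a_n)$ is the matrix with real diagonal entries $a_1,\dots,a_n$ and all off-diagonal entries equal to the real number $0$. A finite matrix $M\in\mathbb{R}^{n\times n}$ satisfies the root condition if $M_{ij}+M_{tt}\ge M_{it}+M_{tj}$ for all $i,j,t\in[n]$. *)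

theory Defs
  imports Main "HOL.Real"
begin

text \<open>Square real matrices of size n are represented as functions nat => nat => real,
  with indices ranging over [n] = {1..n}; entries outside are irrelevant.\<close>

definition mp_mult :: "nat \<Rightarrow> (nat \<Rightarrow> nat \<Rightarrow> real) \<Rightarrow> (nat \<Rightarrow> nat \<Rightarrow> real) \<Rightarrow> (nat \<Rightarrow> nat \<Rightarrow> real)" where
  "mp_mult n A B = (\<lambda>i j. Max ((\<lambda>t. A i t + B t j) ` {1..n}))"

fun mp_pow :: "nat \<Rightarrow> (nat \<Rightarrow> nat \<Rightarrow> real) \<Rightarrow> nat \<Rightarrow> (nat \<Rightarrow> nat \<Rightarrow> real)" where
  "mp_pow n A 0 = A"
| "mp_pow n A (Suc 0) = A"
| "mp_pow n A (Suc (Suc k)) = mp_mult n (mp_pow n A (Suc k)) A"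

definition pdiag :: "(nat \<Rightarrow> real) \<Rightarrow> (nat \<Rightarrow> nat \<Rightarrow> real)" where
  "pdiag a = (\<lambda>i j. if i = j then a i else 0)"

definition root_condition :: "nat \<Rightarrow> (nat \<Rightarrow> nat \<Rightarrow> real) \<Rightarrow> bool" where
  "root_condition n M = (\<forall>i\<in>{1..n}. \<forall>j\<in>{1..n}. \<forall>t\<in>{1..n}. M i j + M t t \<ge> M i t + M t j)"

end

theory Submission
  imports Defs
begin

lemma pow_Suc_Suc: "mp_pow n A (Suc (Suc m)) = mp_mult n (mp_pow n A (Suc m)) A"
  by simp

lemma bounds:
  fixes a :: "nat \<Rightarrow> real"
  assumes le: "\<And>i. i \<in> {1..n} \<Longrightarrow> a i \<le> a n" and nn: "0 \<le> a n" and n1: "1 \<le> n"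
  shows "\<forall>i\<in>{1..n}. \<forall>j\<in>{1..n}.
     (i \<noteq> j \<longrightarrow> mp_pow n (pdiag a) (Suc m) i j \<le> real m * a n
        \<and> mp_pow n (pdiag a) (Suc m) i j \<ge> real m * a i
        \<and> mp_pow n (pdiag a) (Suc m) i j \<ge> real m * a j)
   \<and> mp_pow n (pdiag a) (Suc m) i i \<le> max (real (Suc m) * a i) ((real m - 1) * a n)
   \<and> mp_pow n (pdiag a) (Suc m) i i \<ge> real (Suc m) * a i"
proof (induction m)
  case 0
  then show ?case by (auto simp: pdiag_def)
next
  case (Suc m)
  let ?P = "mp_pow n (pdiag a) (Suc m)"
  let ?Q = "mp_pow n (pdiag a) (Suc (Suc m))"
  have fin: "finite {1..n}" and ne: "{1..n} \<noteq> {}" using n1 by auto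
  have Q: "?Q i j = Max ((\<lambda>t. ?P i t + pdiag a t j) ` {1..n})" for i j
    by (simp only: pow_Suc_Suc mp_mult_def)
  have ge: "?Q i j \<ge> ?P i t + pdiag a t j" if "t \<in> {1..n}" for i j t
    unfolding Q using fin that by (intro Max_ge) auto
  show ?case
  proof (intro ballI conjI impI)
    fix i j assume i: "i \<in> {1..n}" and j: "j \<in> {1..n}"
    have IHi: "?P i i \<le> max (real (Suc m) * a i) ((real m - 1) * a n)" "?P i i \<ge> real (Suc m) * a i"
      using Suc.IH i by auto
    have ain: "a i \<le> a n" "a j \<le> a n" using le i j by auto
    {
      assume ij: "i \<noteq> j"
      show "?Q i j \<le> real (Suc m) * a n"
        unfolding Q
      proof (subst Max_le_iff, simp add: fin, use ne in simp, intro ballI)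
        fix x assume "x \<in> (\<lambda>t. ?P i t + pdiag a t j) ` {1..n}"
        then obtain t where t: "t \<in> {1..n}" and x: "x = ?P i t + pdiag a t j" by auto
        show "x \<le> real (Suc m) * a n"
        proof (cases "t = j")
          case True
          with Suc.IH i t ij have "?P i t \<le> real m * a n" by auto
          with True x ain show ?thesis by (simp add: pdiag_def algebra_simps)
        next
          case False
          hence x2: "x = ?P i t" using x by (simp add: pdiag_def)
          show ?thesis
          proof (cases "t = i")
            case True
            have "max (real (Suc m) * a i) ((real m - 1) * a n) \<le> real (Suc m) * a n"
              using ain nn mult_left_mono[OF ain(1), of "real m"] by (auto simp: algebra_simps)
            with IHi True x2 show ?thesis by (metis order.trans)
          next
            case False
            with Suc.IH i t have "?P i t \<le> real m * a n" by auto
            with x2 nn show ?thesis by (simp add: algebra_simps)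
          qed
        qed
      qed
      have "?Q i j \<ge> ?P i i + pdiag a i j" using ge i by blast
      with IHi ij show "?Q i j \<ge> real (Suc m) * a i" by (simp add: pdiag_def)
      have "?Q i j \<ge> ?P i j + pdiag a j j" using ge j by blast
      moreover have "?P i j \<ge> real m * a j" using Suc.IH i j ij by auto
      ultimately show "?Q i j \<ge> real (Suc m) * a j" by (simp add: pdiag_def algebra_simps)
    }
    show "?Q i i \<le> max (real (Suc (Suc m)) * a i) ((real (Suc m) - 1) * a n)"
      unfolding Q
    proof (subst Max_le_iff, simp add: fin, use ne in simp, intro ballI)
      fix x assume "x \<in> (\<lambda>t. ?P i t + pdiag a t i) ` {1..n}"
      then obtain t where t: "t \<in> {1..n}" and x: "x = ?P i t + pdiag a t i" by auto
      show "x \<le> max (real (Suc (Suc m)) * a i) ((real (Suc m) - 1) * a n)"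
      proof (cases "t = i")
        case True
        hence "x = ?P i i + a i" using x by (simp add: pdiag_def)
        moreover have "(real m - 1) * a n + a i \<le> (real (Suc m) - 1) * a n" using ain by (simp add: algebra_simps)
        ultimately show ?thesis using IHi by (simp add: algebra_simps)
      next
        case False
        hence "x = ?P i t" using x by (simp add: pdiag_def)
        moreover have "?P i t \<le> real m * a n" using Suc.IH i t False by auto
        ultimately show ?thesis by simp
      qed
    qed
    have "?Q i i \<ge> ?P i i + pdiag a i i" using ge i by blast
    with IHi show "?Q i i \<ge> real (Suc (Suc m)) * a i" by (simp add: pdiag_def algebra_simps)
  qed
qed

theorem proposition4p11:
  fixes n k :: nat and a :: "nat \<Rightarrow> real"
  assumes "n \<ge> 3" and "k \<ge> 2"
    and "0 \<le> a 1"
    and "\<And>i j. 1 \<le> i \<Longrightarrow> i \<le> j \<Longrightarrow> j \<le> n \<Longrightarrow> a i \<le> a j"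
    and "\<exists>i. 2 \<le> i \<and> i \<le> n - 1 \<and>
           a i > max ((real k - 2) * a n) (real k * a 1) / (real k - 1)"
  shows "\<not> root_condition n (mp_pow n (pdiag a) k) \<and>
         (\<exists>i'\<in>{1..n}. \<exists>j'\<in>{1..n}. \<exists>t\<in>{1..n}.
            mp_pow n (pdiag a) k i' j' + mp_pow n (pdiag a) k t t
              < mp_pow n (pdiag a) k i' t + mp_pow n (pdiag a) k t j')"
proof -
  obtain i where i: "2 \<le> i" "i \<le> n - 1"
    and ai: "a i > max ((real k - 2) * a n) (real k * a 1) / (real k - 1)" using assms(5) by blast
  obtain m where m: "k = Suc m" and m1: "m \<ge> 1" using assms(2) by (cases k) auto
  have le: "\<And>j. j \<in> {1..n} \<Longrightarrow> a j \<le> a n" using assms(4) by auto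
  have nn: "0 \<le> a n" using assms(3) assms(4)[of 1 n] assms(1) by auto
  have n1: "1 \<le> n" using assms(1) by simp
  note B = bounds[where n=n and a=a and m=m, OF le nn n1]
  let ?D = "mp_pow n (pdiag a) k"
  have i1: "i \<in> {1..n}" "1 \<in> {1..n}" "n \<in> {1..n}" using i assms(1) by auto
  have neq: "i \<noteq> n" "i \<noteq> 1" "1 \<noteq> n" using i assms(1) by auto
  have d1: "?D i n \<le> real m * a n" using B i1 neq assms(1) m by auto
  have d2: "?D 1 n \<ge> real m * a n" using B i1 neq assms(1) m by auto
  have d3: "?D i 1 \<ge> real m * a i" using B i1 neq assms(1) m by auto
  have d4: "?D 1 1 \<le> max (real k * a 1) ((real m - 1) * a n)" using B i1 assms(1) m by auto
  have km: "real k - 1 = real m" "real k - 2 = real m - 1" using m by auto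
  have mpos: "real m > 0" using m1 by auto
  have "max ((real m - 1) * a n) (real k * a 1) < real m * a i"
    using ai km mpos by (simp add: pos_divide_less_eq mult.commute)
  hence d5: "?D 1 1 < ?D i 1" using d4 d3 by (auto simp: max_def split: if_splits)
  have ex: "?D i n + ?D 1 1 < ?D i 1 + ?D 1 n" using d1 d2 d5 by linarith
  show ?thesis
    using ex i1 unfolding root_condition_def by (metis not_le)
qed

end
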